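(* Let $p$ be an odd prime and let $(G,H,T)$ be the envelope of a right conjugacy closed loop of order $2p$. Let $K$ be a subgroup with $H\lneq K\lneq G$, $|G:K|=2$ and $|K:H|=p$. Suppose $1\ne H\trianglelefteq K$. Then $|H|=p$ and there is an involution $a\in G\setminus K$ with $K=H\times H^a$. In particular $G\cong C_p\wr C_2$.
   Context: For a finite loop $\mathcal{L}$ with identity $e$: $G=\langle R_a\mid a\in\mathcal L\rangle$ with $R_a\colon x\mapsto xa$, $H$ the stabilizer of $e$ in $G$, $T=\{R_a\}$; $(G,H,T)$ is the envelope; the loop is right conjugacy closed if $T$ is a union of conjugacy classes of $G$. *)

theory Defs
  imports "HOL-Algebra.Algebra"
begin

definition loop :: "'a set \<Rightarrow> ('a \<Rightarrow> 'a \<Rightarrow> 'a) \<Rightarrow> 'a \<Rightarrow> bool" where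
  "loop L m e \<longleftrightarrow> e \<in> L \<and> (\<forall>x\<in>L. \<forall>y\<in>L. m x y \<in> L)
     \<and> (\<forall>x\<in>L. m e x = x \<and> m x e = x)
     \<and> (\<forall>a\<in>L. bij_betw (\<lambda>x. m x a) L L \<and> bij_betw (\<lambda>x. m a x) L L)"

definition Rmap :: "'a set \<Rightarrow> ('a \<Rightarrow> 'a \<Rightarrow> 'a) \<Rightarrow> 'a \<Rightarrow> ('a \<Rightarrow> 'a)" where
  "Rmap L m a = restrict (\<lambda>x. m x a) L"

definition env_group :: "'a set \<Rightarrow> ('a \<Rightarrow> 'a \<Rightarrow> 'a) \<Rightarrow> ('a \<Rightarrow> 'a) monoid" where
  "env_group L m = (BijGroup L)\<lparr>carrier := generate (BijGroup L) (Rmap L m ` L)\<rparr>"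

definition env_stab :: "'a set \<Rightarrow> ('a \<Rightarrow> 'a \<Rightarrow> 'a) \<Rightarrow> 'a \<Rightarrow> ('a \<Rightarrow> 'a) set" where
  "env_stab L m e = {g \<in> carrier (env_group L m). g e = e}"

definition env_T :: "'a set \<Rightarrow> ('a \<Rightarrow> 'a \<Rightarrow> 'a) \<Rightarrow> ('a \<Rightarrow> 'a) set" where
  "env_T L m = Rmap L m ` L"

definition rcc_loop :: "'a set \<Rightarrow> ('a \<Rightarrow> 'a \<Rightarrow> 'a) \<Rightarrow> 'a \<Rightarrow> bool" where
  "rcc_loop L m e \<longleftrightarrow> loop L m e \<and>
     (\<forall>g \<in> carrier (env_group L m). \<forall>t \<in> env_T L m.
        g \<otimes>\<^bsub>env_group L m\<^esub> t \<otimes>\<^bsub>env_group L m\<^esub> inv\<^bsub>env_group L m\<^esub> g \<in> env_T L m)"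

text \<open>The wreath product C_p wr C_2 = (C_p x C_p) \<rtimes> C_2, C_2 swapping the coordinates.\<close>
fun wr_mult :: "nat \<Rightarrow> nat \<times> nat \<times> bool \<Rightarrow> nat \<times> nat \<times> bool \<Rightarrow> nat \<times> nat \<times> bool" where
  "wr_mult p (x1, y1, b1) (x2, y2, b2) =
     (if b1 then ((x1 + y2) mod p, (y1 + x2) mod p, b1 \<noteq> b2)
            else ((x1 + x2) mod p, (y1 + y2) mod p, b1 \<noteq> b2))"

definition wreath_Cp_C2 :: "nat \<Rightarrow> (nat \<times> nat \<times> bool) monoid" where
  "wreath_Cp_C2 p = \<lparr> carrier = {(x, y, b). x < p \<and> y < p}, monoid.mult = wr_mult p, one = (0, 0, False) \<rparr>"

end

theory Submission
  imports Defs
begin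


lemma (in group) inv_cancel_simps[simp]:
  "x \<in> carrier G \<Longrightarrow> y \<in> carrier G \<Longrightarrow> x \<otimes> (inv x \<otimes> y) = y"
  "x \<in> carrier G \<Longrightarrow> y \<in> carrier G \<Longrightarrow> inv x \<otimes> (x \<otimes> y) = y"
  by (simp_all add: m_assoc[symmetric])

lemma (in group) pow_mod_eq:
  assumes "x \<in> carrier G" "x [^] (p::nat) = \<one>"
  shows "x [^] (n mod p) = x [^] n"
proof -
  have "x [^] n = x [^] (p * (n div p) + n mod p)" by simp
  also have "\<dots> = x [^] (p * (n div p)) \<otimes> x [^] (n mod p)"
    by (simp only: nat_pow_mult[OF assms(1)])
  also have "\<dots> = (x [^] p) [^] (n div p) \<otimes> x [^] (n mod p)"
    by (simp only: nat_pow_pow[OF assms(1)])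
  also have "\<dots> = x [^] (n mod p)" using assms by simp
  finally show ?thesis by (rule sym)
qed

lemma (in group) comm_pow1:
  assumes "x \<in> carrier G" "y \<in> carrier G" "x \<otimes> y = y \<otimes> x"
  shows "x \<otimes> y [^] (m::nat) = y [^] m \<otimes> x"
proof (induction m)
  case 0 then show ?case using assms by simp
next
  case (Suc m)
  have "x \<otimes> y [^] Suc m = (x \<otimes> y [^] m) \<otimes> y" using assms by (simp add: m_assoc)
  also have "\<dots> = y [^] m \<otimes> (x \<otimes> y)" using assms Suc by (simp add: m_assoc)
  also have "\<dots> = y [^] Suc m \<otimes> x" using assms by (simp add: m_assoc)
  finally show ?case .
qed

lemma (in group) comm_pow:
  assumes "x \<in> carrier G" "y \<in> carrier G" "x \<otimes> y = y \<otimes> x"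
  shows "x [^] (n::nat) \<otimes> y [^] (m::nat) = y [^] m \<otimes> x [^] n"
proof -
  have "y [^] m \<otimes> x = x \<otimes> y [^] m" using comm_pow1 assms by simp
  hence "y [^] m \<otimes> x [^] n = x [^] n \<otimes> y [^] m"
    using comm_pow1[of "y [^] m" x n] assms by simp
  thus ?thesis by simp
qed

lemma (in group) conj_pow:
  assumes "x \<in> carrier G" "a \<in> carrier G"
  shows "inv a \<otimes> x [^] (n::nat) \<otimes> a = (inv a \<otimes> x \<otimes> a) [^] n"
proof (induction n)
  case 0 then show ?case using assms by simp
next
  case (Suc n)
  have "(inv a \<otimes> x \<otimes> a) [^] Suc n = (inv a \<otimes> x [^] n \<otimes> a) \<otimes> (inv a \<otimes> x \<otimes> a)"
    using Suc by simp
  also have "\<dots> = inv a \<otimes> (x [^] n \<otimes> (a \<otimes> inv a) \<otimes> x) \<otimes> a"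
    using assms by (simp add: m_assoc)
  also have "\<dots> = inv a \<otimes> x [^] Suc n \<otimes> a"
    using assms by (simp add: m_assoc)
  finally show ?case by simp
qed

lemma (in group) pow_inj_prime:
  assumes "x \<in> carrier G" "x [^] (p::nat) = \<one>" "x \<noteq> \<one>" "Factorial_Ring.prime p"
    "i < p" "j < p" "x [^] i = x [^] j"
  shows "i = j"
proof -
  have "ord x dvd p" using pow_eq_id assms by blast
  moreover have "ord x \<noteq> 1" using pow_eq_id[of x 1] assms by auto
  ultimately have op: "ord x = p" using assms(4) unfolding prime_nat_iff by blast
  { fix i j assume ij: "i \<le> j" "j < p" "x [^] i = x [^] (j::nat)"
    have "x [^] i \<otimes> x [^] (j - i) = x [^] (i + (j - i))" by (rule nat_pow_mult[OF assms(1)])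
    hence "x [^] j = x [^] i \<otimes> x [^] (j - i)" using ij by simp
    hence "x [^] i \<otimes> x [^] (j - i) = x [^] i \<otimes> \<one>" using ij assms(1) by simp
    hence "x [^] (j - i) = \<one>" using assms(1) l_cancel by (metis nat_pow_closed one_closed)
    hence "p dvd (j - i)" using pow_eq_id assms(1) op by simp
    moreover have "j - i < p" using ij by linarith
    ultimately have "j - i = 0" using dvd_imp_le by fastforce
    hence "i = j" using ij by simp }
  thus ?thesis using assms by (metis nat_le_linear)
qed



locale cor_setting = group G for G (structure) +
  fixes K H :: "'a set" and p :: nat
  assumes fin: "finite (carrier G)"
    and Ksub: "subgroup K G" and HK: "H \<subset> K" and KG: "K \<subset> carrier G"
    and idx2: "card (rcosets K) = 2"
    and idxp: "card (rcosets\<^bsub>G\<lparr>carrier := K\<rparr>\<^esub> H) = p"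
    and pprime: "Factorial_Ring.prime p" and podd: "odd p"
    and Hnt: "H \<noteq> {\<one>}"
    and Hnorm: "H \<lhd> G\<lparr>carrier := K\<rparr>"
    and core: "\<And>g. g \<in> H \<Longrightarrow> (\<forall>x\<in>carrier G. x \<otimes> g \<otimes> inv x \<in> H) \<Longrightarrow> g = \<one>"
begin

lemma Kc: "K \<subseteq> carrier G" using KG by auto

lemma Hsub: "subgroup H (G\<lparr>carrier := K\<rparr>)" using Hnorm normal_imp_subgroup by blast

lemma HsubG: "subgroup H G"
proof -
  have "group (G\<lparr>carrier := K\<rparr>)" using Ksub subgroup.subgroup_is_group is_group by blast
  then show ?thesis using Hsub Ksub
    by (metis HK group.incl_subgroup is_group psubset_imp_subset)
qed

lemma Hc: "H \<subseteq> carrier G" using HsubG subgroup.subset by blast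

lemma Hconj: "k \<in> K \<Longrightarrow> h \<in> H \<Longrightarrow> k \<otimes> h \<otimes> inv k \<in> H"
proof -
  assume k: "k \<in> K" and h: "h \<in> H"
  have "k \<otimes>\<^bsub>G\<lparr>carrier := K\<rparr>\<^esub> h \<otimes>\<^bsub>G\<lparr>carrier := K\<rparr>\<^esub> inv\<^bsub>G\<lparr>carrier := K\<rparr>\<^esub> k \<in> H"
    using Hnorm k h normal.inv_op_closed2 by fastforce
  thus ?thesis using k Ksub by simp
qed

lemma idx2_mult:
  assumes x: "x \<in> carrier G" "x \<notin> K" and y: "y \<in> carrier G" "y \<notin> K"
  shows "x \<otimes> y \<in> K"
proof -
  have iy: "inv y \<notin> K" using y Ksub subgroup.m_inv_closed by (metis inv_inv)
  have fr: "finite (rcosets K)" using fin by (simp add: RCOSETS_def)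
  have r1: "K \<in> rcosets K" using Ksub rcosetsI[of K \<one>] Kc by (simp add: coset_join2)
  have r2: "K #> x \<in> rcosets K" using rcosetsI Kc x by blast
  have r3: "K #> inv y \<in> rcosets K" using rcosetsI Kc y by blast
  have n2: "K #> x \<noteq> K" using rcos_self[OF x(1) Ksub] x by auto
  have n3: "K #> inv y \<noteq> K" using rcos_self[of "inv y" K] Ksub y iy by auto
  have "K #> x = K #> inv y"
  proof (rule ccontr)
    assume ne: "K #> x \<noteq> K #> inv y"
    have "card {K, K #> x, K #> inv y} \<le> card (rcosets K)"
      using r1 r2 r3 fr by (intro card_mono) auto
    moreover have "card {K, K #> x, K #> inv y} = 3" using ne n2 n3 by auto
    ultimately show False using idx2 by simp
  qed
  hence "x \<in> K #> inv y" using rcos_self[OF x(1) Ksub] by simp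
  then obtain k where k: "k \<in> K" "x = k \<otimes> inv y" unfolding r_coset_def by auto
  have kc: "k \<in> carrier G" using k Kc by auto
  hence "x \<otimes> y = k" using y k by (simp add: m_assoc)
  thus ?thesis using k by simp
qed

lemma Knormal: "g \<in> carrier G \<Longrightarrow> k \<in> K \<Longrightarrow> g \<otimes> k \<otimes> inv g \<in> K"
proof -
  assume g: "g \<in> carrier G" and k: "k \<in> K"
  show ?thesis
  proof (cases "g \<in> K")
    case True thus ?thesis using k Ksub by (simp add: subgroup.m_closed subgroup.m_inv_closed)
  next
    case False
    have kc: "k \<in> carrier G" using k Kc by auto
    have "g \<otimes> k \<notin> K"
    proof
      assume "g \<otimes> k \<in> K"
      hence "g \<otimes> k \<otimes> inv k \<in> K" using k Ksub by (simp add: subgroup.m_closed subgroup.m_inv_closed)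
      thus False using False g kc by (simp add: m_assoc)
    qed
    moreover have "inv g \<notin> K" using False Ksub g by (metis inv_inv subgroup.m_inv_closed)
    ultimately show ?thesis using idx2_mult g kc by simp
  qed
qed

definition cj :: "'a \<Rightarrow> 'a set" where
  "cj b = {inv b \<otimes> h \<otimes> b | h. h \<in> H}"

lemma order_K: "card K = p * card H"
proof -
  have gK: "group (G\<lparr>carrier := K\<rparr>)" using Ksub subgroup.subgroup_is_group is_group by blast
  have "finite K" using fin Kc finite_subset by blast
  hence "card (rcosets\<^bsub>G\<lparr>carrier := K\<rparr>\<^esub> H) * card H = order (G\<lparr>carrier := K\<rparr>)"
    using group.lagrange[OF gK] Hsub by simp
  thus ?thesis using idxp by (simp add: order_def)
qed

lemma order_G: "order G = 2 * card K"
  using lagrange[OF Ksub] idx2 by simp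

lemma sub_lagr: "subgroup S G \<Longrightarrow> S \<subseteq> K \<Longrightarrow> card S dvd card K"
proof -
  assume S: "subgroup S G" "S \<subseteq> K"
  have gK: "group (G\<lparr>carrier := K\<rparr>)" using Ksub subgroup.subgroup_is_group is_group by blast
  have SK: "subgroup S (G\<lparr>carrier := K\<rparr>)" using subgroup_incl S Ksub by blast
  have "finite K" using fin Kc finite_subset by blast
  hence "card (rcosets\<^bsub>G\<lparr>carrier := K\<rparr>\<^esub> S) * card S = order (G\<lparr>carrier := K\<rparr>)"
    using group.lagrange[OF gK] SK by simp
  hence "card (rcosets\<^bsub>G\<lparr>carrier := K\<rparr>\<^esub> S) * card S = card K" by (simp add: order_def)
  thus ?thesis by (metis dvd_triv_right)
qed

context
  fixes b assumes b: "b \<in> carrier G" "b \<notin> K"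
begin

lemma cj_sub_K: "cj b \<subseteq> K"
proof
  fix x assume "x \<in> cj b"
  then obtain h where h: "h \<in> H" "x = inv b \<otimes> h \<otimes> b" unfolding cj_def by auto
  have hK: "h \<in> K" using h(1) HK by blast
  have "inv b \<otimes> h \<otimes> inv (inv b) \<in> K" using Knormal[OF inv_closed[OF b(1)] hK] .
  thus "x \<in> K" using h b by simp
qed

lemma cjI: "h \<in> H \<Longrightarrow> inv b \<otimes> h \<otimes> b \<in> cj b"
  unfolding cj_def by blast

lemma cj_subgroup: "subgroup (cj b) G"
proof (rule subgroupI)
  show "cj b \<subseteq> carrier G" using cj_sub_K Kc by auto
  have o: "\<one> \<in> H" by (rule subgroup.one_closed[OF HsubG])
  show "cj b \<noteq> {}" using cjI[OF o] by blast
next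
  fix x assume "x \<in> cj b"
  then obtain h where h: "h \<in> H" "x = inv b \<otimes> h \<otimes> b" unfolding cj_def by auto
  have hc: "h \<in> carrier G" using h(1) Hc by blast
  have e: "inv x = inv b \<otimes> inv h \<otimes> b" unfolding h(2) by (rule inv_equality) (simp_all add: m_assoc b(1) hc)
  have "inv h \<in> H" by (rule subgroup.m_inv_closed[OF HsubG h(1)])
  thus "inv x \<in> cj b" unfolding e by (rule cjI)
next
  fix x y assume xy: "x \<in> cj b" "y \<in> cj b"
  from xy(1) obtain h where h: "h \<in> H" "x = inv b \<otimes> h \<otimes> b" unfolding cj_def by auto
  from xy(2) obtain k where k: "k \<in> H" "y = inv b \<otimes> k \<otimes> b" unfolding cj_def by auto
  have hc: "h \<in> carrier G" "k \<in> carrier G" using h(1) k(1) Hc by blast+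
  have e: "x \<otimes> y = inv b \<otimes> (h \<otimes> k) \<otimes> b" unfolding h(2) k(2) using b(1) hc by (simp add: m_assoc)
  have "h \<otimes> k \<in> H" by (rule subgroup.m_closed[OF HsubG h(1) k(1)])
  thus "x \<otimes> y \<in> cj b" unfolding e by (rule cjI)
qed

lemma cj_normal: "cj b \<lhd> G\<lparr>carrier := K\<rparr>"
proof -
  have gK: "group (G\<lparr>carrier := K\<rparr>)" using Ksub subgroup.subgroup_is_group is_group by blast
  have sK: "subgroup (cj b) (G\<lparr>carrier := K\<rparr>)" using subgroup_incl cj_subgroup cj_sub_K Ksub by blast
  show ?thesis unfolding group.normal_inv_iff[OF gK]
  proof (intro conjI ballI sK)
    fix k x assume k: "k \<in> carrier (G\<lparr>carrier := K\<rparr>)" and x: "x \<in> cj b"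
    then obtain h where h: "h \<in> H" "x = inv b \<otimes> h \<otimes> b" unfolding cj_def by auto
    have kK: "k \<in> K" using k by simp
    have kc: "k \<in> carrier G" using kK Kc by auto
    have hc: "h \<in> carrier G" using h(1) Hc by blast
    define c where "c = b \<otimes> k \<otimes> inv b"
    have cK: "c \<in> K" unfolding c_def using Knormal b kK by blast
    have cc: "c \<in> carrier G" using cK Kc by auto
    have cH: "c \<otimes> h \<otimes> inv c \<in> H" using Hconj cK h(1) by blast
    have ic: "inv c = b \<otimes> inv k \<otimes> inv b"
      unfolding c_def by (rule inv_equality) (simp_all add: m_assoc b(1) kc)
    have eq: "k \<otimes> x \<otimes> inv k = inv b \<otimes> (c \<otimes> h \<otimes> inv c) \<otimes> b"
      unfolding ic unfolding c_def h(2) using b(1) kc hc by (simp add: m_assoc)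
    have "k \<otimes> x \<otimes> inv k \<in> cj b" unfolding eq by (rule cjI[OF cH])
    thus "k \<otimes>\<^bsub>G\<lparr>carrier := K\<rparr>\<^esub> x \<otimes>\<^bsub>G\<lparr>carrier := K\<rparr>\<^esub> inv\<^bsub>G\<lparr>carrier := K\<rparr>\<^esub> k \<in> cj b"
      using kK Ksub by simp
  qed
qed

lemma cj_inter: "H \<inter> cj b = {\<one>}"
proof
  show "{\<one>} \<subseteq> H \<inter> cj b" using subgroup.one_closed[OF HsubG] subgroup.one_closed[OF cj_subgroup] by blast
  show "H \<inter> cj b \<subseteq> {\<one>}"
  proof
    fix g assume g: "g \<in> H \<inter> cj b"
    then obtain h where h: "h \<in> H" "g = inv b \<otimes> h \<otimes> b" unfolding cj_def by auto
    have hc: "h \<in> carrier G" using h(1) Hc by blast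
    have "\<forall>x\<in>carrier G. x \<otimes> g \<otimes> inv x \<in> H"
    proof
      fix x assume x: "x \<in> carrier G"
      show "x \<otimes> g \<otimes> inv x \<in> H"
      proof (cases "x \<in> K")
        case True thus ?thesis using Hconj g by blast
      next
        case False
        have "inv b \<notin> K" using b Ksub by (metis inv_inv subgroup.m_inv_closed)
        hence xb: "x \<otimes> inv b \<in> K" using idx2_mult x False b by simp
        have ixb: "inv (x \<otimes> inv b) = b \<otimes> inv x"
          by (rule inv_equality) (simp_all add: m_assoc x b(1))
        have "x \<otimes> g \<otimes> inv x = (x \<otimes> inv b) \<otimes> h \<otimes> inv (x \<otimes> inv b)"
          unfolding ixb unfolding h(2) using x b(1) hc by (simp add: m_assoc)
        thus ?thesis using Hconj xb h by simp
      qed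
    qed
    thus "g \<in> {\<one>}" using core g by blast
  qed
qed

lemma card_cj: "card (cj b) = card H"
proof -
  have "cj b = (\<lambda>h. inv b \<otimes> h \<otimes> b) ` H" unfolding cj_def by auto
  moreover have "inj_on (\<lambda>h. inv b \<otimes> h \<otimes> b) H"
  proof (rule inj_onI)
    fix x y assume xy: "x \<in> H" "y \<in> H" "inv b \<otimes> x \<otimes> b = inv b \<otimes> y \<otimes> b"
    have c: "x \<in> carrier G" "y \<in> carrier G" using xy(1,2) Hc by blast+
    have "inv b \<otimes> x = inv b \<otimes> y" using r_cancel[of b "inv b \<otimes> x" "inv b \<otimes> y"] xy c b by simp
    thus "x = y" using l_cancel[of "inv b" x y] c b by simp
  qed
  ultimately show ?thesis by (simp add: card_image)
qed

lemma card_prod: "card (H <#> cj b) = card H * card H"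
proof -
  have "H <#> cj b = (\<lambda>(x,y). x \<otimes> y) ` (H \<times> cj b)" unfolding set_mult_def by auto
  moreover have "inj_on (\<lambda>(x,y). x \<otimes> y) (H \<times> cj b)"
  proof (rule inj_onI, clarify)
    fix x1 y1 x2 y2 assume a: "x1 \<in> H" "y1 \<in> cj b" "x2 \<in> H" "y2 \<in> cj b" "x1 \<otimes> y1 = x2 \<otimes> y2"
    have c: "x1 \<in> carrier G" "x2 \<in> carrier G" "y1 \<in> carrier G" "y2 \<in> carrier G"
      using a(1-4) Hc cj_sub_K Kc by blast+
    have e: "inv x2 \<otimes> x1 = y2 \<otimes> inv y1"
    proof -
      have "inv x2 \<otimes> (x1 \<otimes> y1) \<otimes> inv y1 = inv x2 \<otimes> (x2 \<otimes> y2) \<otimes> inv y1" using a by simp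
      thus ?thesis using c by (simp add: m_assoc)
    qed
    have "inv x2 \<otimes> x1 \<in> H" using a HsubG by (simp add: subgroup.m_closed subgroup.m_inv_closed)
    moreover have "y2 \<otimes> inv y1 \<in> cj b" using a cj_subgroup by (simp add: subgroup.m_closed subgroup.m_inv_closed)
    ultimately have "inv x2 \<otimes> x1 = \<one>" using e cj_inter by auto
    hence "x2 \<otimes> (inv x2 \<otimes> x1) = x2" using c by simp
    hence x12: "x1 = x2" using c by simp
    hence "x1 \<otimes> y1 = x1 \<otimes> y2" using a by simp
    hence "y1 = y2" using l_cancel[of x1 y1 y2] c by simp
    thus "x1 = x2 \<and> y1 = y2" using x12 by simp
  qed
  moreover have "finite H" using fin Hc finite_subset by blast
  ultimately show ?thesis using card_cj by (simp add: card_image card_cartesian_product)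
qed

end

end


context cor_setting begin

lemma finH: "finite H" using fin Hc finite_subset by blast
lemma finK: "finite K" using fin Kc finite_subset by blast
lemma oneH: "\<one> \<in> H" by (rule subgroup.one_closed[OF HsubG])

lemma prod_sub:
  assumes b: "b \<in> carrier G" "b \<notin> K"
  shows "subgroup (H <#> cj b) G" "H <#> cj b \<subseteq> K"
proof -
  have sK: "subgroup (cj b) (G\<lparr>carrier := K\<rparr>)"
    by (rule subgroup_incl[OF cj_subgroup[OF b] Ksub cj_sub_K[OF b]])
  have "second_isomorphism_grp H (G\<lparr>carrier := K\<rparr>) (cj b)"
    unfolding second_isomorphism_grp_def second_isomorphism_grp_axioms_def using Hnorm sK by (rule conjI)
  hence s: "subgroup (H <#>\<^bsub>G\<lparr>carrier := K\<rparr>\<^esub> cj b) (G\<lparr>carrier := K\<rparr>)"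
    by (rule second_isomorphism_grp.normal_set_mult_subgroup)
  have eq: "H <#>\<^bsub>G\<lparr>carrier := K\<rparr>\<^esub> cj b = H <#> cj b" by (simp add: set_mult_def)
  have s': "subgroup (H <#> cj b) (G\<lparr>carrier := K\<rparr>)" using s unfolding eq .
  show "H <#> cj b \<subseteq> K" using subgroup.subset[OF s'] by simp
  show "subgroup (H <#> cj b) G" by (rule incl_subgroup[OF Ksub s'])
qed

lemma card_H: "card H = p"
proof -
  obtain b where b: "b \<in> carrier G" "b \<notin> K" using KG by blast
  have "card (H <#> cj b) dvd card K" by (rule sub_lagr[OF prod_sub[OF b]])
  hence "card H * card H dvd card H * p" unfolding card_prod[OF b] order_K by (simp add: mult.commute)
  moreover have "card H > 0" using finH oneH by (simp add: card_gt_0_iff) blast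
  ultimately have d: "card H dvd p" by simp
  have "card H \<noteq> 1"
  proof
    assume "card H = 1"
    then obtain z where z: "H = {z}" by (rule card_1_singletonE)
    have "H = {\<one>}" using z oneH by simp
    thus False using Hnt by simp
  qed
  thus ?thesis using d pprime unfolding prime_nat_iff by blast
qed

lemma card_K: "card K = p * p" using order_K card_H by simp

lemma involution: "\<exists>a \<in> carrier G - K. a \<noteq> \<one> \<and> a \<otimes> a = \<one>"
proof -
  have "order G = 2 ^ 1 * (p * p)" using order_G card_K by simp
  then obtain Q where Q: "subgroup Q G" "card Q = 2 ^ 1"
    using sylow_thm[of 2 G 1 "p * p"] is_group fin by auto
  have o: "\<one> \<in> Q" by (rule subgroup.one_closed[OF Q(1)])
  have fQ: "finite Q" using Q(2) card.infinite by fastforce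
  obtain x where x: "x \<in> Q" "x \<noteq> \<one>"
  proof -
    have "Q \<noteq> {\<one>}" using Q(2) by auto
    thus ?thesis using that o by blast
  qed
  have Qeq: "Q = {\<one>, x}"
  proof -
    have s: "{\<one>, x} \<subseteq> Q" using o x(1) by blast
    have c: "card {\<one>, x} = card Q" using x(2) Q(2) by simp
    show ?thesis using card_subset_eq[OF fQ s c] by simp
  qed
  have xc: "x \<in> carrier G" using x(1) subgroup.subset[OF Q(1)] by blast
  have "x \<otimes> x \<in> Q" by (rule subgroup.m_closed[OF Q(1) x(1) x(1)])
  moreover have "x \<otimes> x \<noteq> x"
  proof
    assume "x \<otimes> x = x"
    hence "x \<otimes> x = x \<otimes> \<one>" using xc by simp
    hence "x = \<one>" using l_cancel[of x x \<one>] xc by simp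
    thus False using x(2) by simp
  qed
  ultimately have xx: "x \<otimes> x = \<one>" unfolding Qeq by simp
  have "x \<notin> K"
  proof
    assume "x \<in> K"
    hence "Q \<subseteq> K" unfolding Qeq using subgroup.one_closed[OF Ksub] by simp
    hence "card Q dvd card K" by (rule sub_lagr[OF Q(1)])
    hence "2 dvd p * p" using Q(2) card_K by simp
    thus False using podd by simp
  qed
  thus ?thesis using xc x(2) xx by blast
qed

end


lemma iso_sym_closed:
  assumes "h \<in> iso A B"
    and cl: "\<And>x y. x \<in> carrier A \<Longrightarrow> y \<in> carrier A \<Longrightarrow> x \<otimes>\<^bsub>A\<^esub> y \<in> carrier A"
  shows "inv_into (carrier A) h \<in> iso B A"
proof -
  have h: "h \<in> hom A B" "bij_betw h (carrier A) (carrier B)"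
    using assms by (auto simp add: iso_def bij_betw_inv_into)
  then have HG: "bij_betw (inv_into (carrier A) h) (carrier B) (carrier A)"
    by (simp add: bij_betw_inv_into)
  have "inv_into (carrier A) h \<in> hom B A"
    unfolding hom_def
  proof safe
    show *: "\<And>x. x \<in> carrier B \<Longrightarrow> inv_into (carrier A) h x \<in> carrier A"
      by (meson HG bij_betwE)
    show "inv_into (carrier A) h (x \<otimes>\<^bsub>B\<^esub> y) = inv_into (carrier A) h x \<otimes>\<^bsub>A\<^esub> inv_into (carrier A) h y"
      if "x \<in> carrier B" "y \<in> carrier B" for x y
    proof (rule inv_into_f_eq)
      show "inj_on h (carrier A)"
        using bij_betw_def h(2) by blast
      show "inv_into (carrier A) h x \<otimes>\<^bsub>A\<^esub> inv_into (carrier A) h y \<in> carrier A"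
        by (simp add: * cl that)
      show "h (inv_into (carrier A) h x \<otimes>\<^bsub>A\<^esub> inv_into (carrier A) h y) = x \<otimes>\<^bsub>B\<^esub> y"
        using h bij_betw_inv_into_right [of h] unfolding hom_def by (simp add: "*" that)
    qed
  qed
  then show ?thesis
    by (simp add: Group.iso_def bij_betw_inv_into h)
qed

lemma (in group) subgroup_pow_closed:
  assumes "subgroup S G" "x \<in> S" shows "x [^] (n::nat) \<in> S"
proof (induction n)
  case 0 then show ?case using assms subgroup.one_closed by simp
next
  case (Suc n) then show ?case using assms subgroup.m_closed by simp
qed

lemma (in group) wr_hom_aux:
  assumes A: "A \<in> carrier G" and B: "B \<in> carrier G" and a: "a \<in> carrier G"
    and Ap: "A [^] (p::nat) = \<one>" and Bp: "B [^] p = \<one>" and AB: "A \<otimes> B = B \<otimes> A"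
    and aa: "a \<otimes> a = \<one>" and aAa: "a \<otimes> A \<otimes> a = B"
  shows "(case wr_mult p (x1, y1, b1) (x2, y2, b2) of (x, y, b) \<Rightarrow> A [^] x \<otimes> B [^] y \<otimes> (if b then a else \<one>))
       = (A [^] x1 \<otimes> B [^] y1 \<otimes> (if b1 then a else \<one>)) \<otimes> (A [^] x2 \<otimes> B [^] y2 \<otimes> (if b2 then a else \<one>))"
proof -
  have ia: "inv a = a" by (rule inv_equality[OF aa a a])
  have aBa: "a \<otimes> B \<otimes> a = A"
  proof -
    have "a \<otimes> B \<otimes> a = a \<otimes> (a \<otimes> A \<otimes> a) \<otimes> a" unfolding aAa ..
    also have "\<dots> = (a \<otimes> a) \<otimes> A \<otimes> (a \<otimes> a)" using a A by (simp add: m_assoc)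
    finally show ?thesis using aa A by simp
  qed
  have pmA: "\<And>n. A [^] (n mod p) = A [^] n" by (rule pow_mod_eq[OF A Ap])
  have pmB: "\<And>n. B [^] (n mod p) = B [^] n" by (rule pow_mod_eq[OF B Bp])
  have paA: "\<And>m n. A [^] (m + n) = A [^] m \<otimes> A [^] (n::nat)" by (rule nat_pow_mult[OF A, symmetric])
  have paB: "\<And>m n. B [^] (m + n) = B [^] m \<otimes> B [^] (n::nat)" by (rule nat_pow_mult[OF B, symmetric])
  have cAB: "\<And>m n. B [^] (m::nat) \<otimes> A [^] (n::nat) = A [^] n \<otimes> B [^] m"
    by (rule comm_pow[OF B A AB[symmetric]])
  have r3: "\<And>m n Z. Z \<in> carrier G \<Longrightarrow> B [^] (m::nat) \<otimes> (A [^] (n::nat) \<otimes> Z) = A [^] n \<otimes> (B [^] m \<otimes> Z)"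
  proof -
    fix m n Z assume Z: "Z \<in> carrier G"
    have "B [^] (m::nat) \<otimes> (A [^] (n::nat) \<otimes> Z) = (B [^] m \<otimes> A [^] n) \<otimes> Z"
      using A B Z by (simp only: m_assoc nat_pow_closed)
    also have "\<dots> = (A [^] n \<otimes> B [^] m) \<otimes> Z" unfolding cAB ..
    also have "\<dots> = A [^] n \<otimes> (B [^] m \<otimes> Z)" using A B Z by (simp only: m_assoc nat_pow_closed)
    finally show "B [^] (m::nat) \<otimes> (A [^] (n::nat) \<otimes> Z) = A [^] n \<otimes> (B [^] m \<otimes> Z)" .
  qed
  have aA: "\<And>n. a \<otimes> A [^] (n::nat) = B [^] n \<otimes> a"
  proof -
    fix n :: nat
    have "inv a \<otimes> A [^] n \<otimes> a = (inv a \<otimes> A \<otimes> a) [^] n" by (rule conj_pow[OF A a])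
    hence "a \<otimes> A [^] n \<otimes> a = B [^] n" unfolding ia aAa .
    hence "a \<otimes> A [^] n \<otimes> a \<otimes> a = B [^] n \<otimes> a" by simp
    thus "a \<otimes> A [^] n = B [^] n \<otimes> a" using aa a A by (simp add: m_assoc)
  qed
  have aB: "\<And>n. a \<otimes> B [^] (n::nat) = A [^] n \<otimes> a"
  proof -
    fix n :: nat
    have "inv a \<otimes> B [^] n \<otimes> a = (inv a \<otimes> B \<otimes> a) [^] n" by (rule conj_pow[OF B a])
    hence "a \<otimes> B [^] n \<otimes> a = A [^] n" unfolding ia aBa .
    hence "a \<otimes> B [^] n \<otimes> a \<otimes> a = A [^] n \<otimes> a" by simp
    thus "a \<otimes> B [^] n = A [^] n \<otimes> a" using aa a B by (simp add: m_assoc)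
  qed
  have r1: "\<And>n Z. Z \<in> carrier G \<Longrightarrow> a \<otimes> (A [^] (n::nat) \<otimes> Z) = B [^] n \<otimes> (a \<otimes> Z)"
  proof -
    fix n Z assume Z: "Z \<in> carrier G"
    have "a \<otimes> (A [^] (n::nat) \<otimes> Z) = (a \<otimes> A [^] n) \<otimes> Z" using A a Z by (simp only: m_assoc nat_pow_closed)
    also have "\<dots> = (B [^] n \<otimes> a) \<otimes> Z" unfolding aA ..
    also have "\<dots> = B [^] n \<otimes> (a \<otimes> Z)" using B a Z by (simp only: m_assoc nat_pow_closed)
    finally show "a \<otimes> (A [^] (n::nat) \<otimes> Z) = B [^] n \<otimes> (a \<otimes> Z)" .
  qed
  have r2: "\<And>n Z. Z \<in> carrier G \<Longrightarrow> a \<otimes> (B [^] (n::nat) \<otimes> Z) = A [^] n \<otimes> (a \<otimes> Z)"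
  proof -
    fix n Z assume Z: "Z \<in> carrier G"
    have "a \<otimes> (B [^] (n::nat) \<otimes> Z) = (a \<otimes> B [^] n) \<otimes> Z" using B a Z by (simp only: m_assoc nat_pow_closed)
    also have "\<dots> = (A [^] n \<otimes> a) \<otimes> Z" unfolding aB ..
    also have "\<dots> = A [^] n \<otimes> (a \<otimes> Z)" using A a Z by (simp only: m_assoc nat_pow_closed)
    finally show "a \<otimes> (B [^] (n::nat) \<otimes> Z) = A [^] n \<otimes> (a \<otimes> Z)" .
  qed
  have aa': "\<And>Z. Z \<in> carrier G \<Longrightarrow> a \<otimes> (a \<otimes> Z) = Z" using aa a by (simp add: m_assoc[symmetric])
  show ?thesis
  proof (cases b1)
    case True
    then show ?thesis using A B a by (cases b2) (simp_all add: pmA pmB paA paB m_assoc r1 r2 r3 aa aa' aA aB cAB)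
  next
    case False
    then show ?thesis using A B a by (cases b2) (simp_all add: pmA pmB paA paB m_assoc r1 r2 r3 aa aa' aA aB cAB)
  qed
qed



context cor_setting begin

lemma normK:
  assumes N: "N \<lhd> G\<lparr>carrier := K\<rparr>" and k: "k \<in> K" and n: "n \<in> N"
  shows "k \<otimes> n \<otimes> inv k \<in> N"
proof -
  have "k \<otimes>\<^bsub>G\<lparr>carrier := K\<rparr>\<^esub> n \<otimes>\<^bsub>G\<lparr>carrier := K\<rparr>\<^esub> inv\<^bsub>G\<lparr>carrier := K\<rparr>\<^esub> k \<in> N"
    by (rule normal.inv_op_closed2[OF N]) (simp_all add: k n)
  thus ?thesis using m_inv_consistent[OF Ksub k] by simp
qed

lemma prod_inj:
  assumes b: "b \<in> carrier G" "b \<notin> K"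
    and a: "x1 \<in> H" "y1 \<in> cj b" "x2 \<in> H" "y2 \<in> cj b" and eq: "x1 \<otimes> y1 = x2 \<otimes> y2"
  shows "x1 = x2 \<and> y1 = y2"
proof -
  have c: "x1 \<in> carrier G" "x2 \<in> carrier G" "y1 \<in> carrier G" "y2 \<in> carrier G"
    using a(1-4) Hc cj_sub_K[OF b] Kc by blast+
  have e: "inv x2 \<otimes> x1 = y2 \<otimes> inv y1"
  proof -
    have "inv x2 \<otimes> (x1 \<otimes> y1) \<otimes> inv y1 = inv x2 \<otimes> (x2 \<otimes> y2) \<otimes> inv y1" unfolding eq ..
    thus ?thesis using c by (simp add: m_assoc)
  qed
  have "inv x2 \<otimes> x1 \<in> H"
    by (rule subgroup.m_closed[OF HsubG subgroup.m_inv_closed[OF HsubG a(3)] a(1)])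
  moreover have "y2 \<otimes> inv y1 \<in> cj b"
    by (rule subgroup.m_closed[OF cj_subgroup[OF b] a(4) subgroup.m_inv_closed[OF cj_subgroup[OF b] a(2)]])
  ultimately have "inv x2 \<otimes> x1 \<in> H \<inter> cj b" unfolding e by simp
  hence "inv x2 \<otimes> x1 = \<one>" unfolding cj_inter[OF b] by simp
  hence "x2 \<otimes> (inv x2 \<otimes> x1) = x2" using c by simp
  hence x12: "x1 = x2" using c by simp
  hence "x1 \<otimes> y1 = x1 \<otimes> y2" using eq by simp
  hence "y1 = y2" using l_cancel[of x1 y1 y2] c by simp
  thus ?thesis using x12 by simp
qed

lemma p_pos: "p > 0" using pprime prime_gt_0_nat by blast

lemma W_closed:
  "x \<in> carrier (wreath_Cp_C2 p) \<Longrightarrow> y \<in> carrier (wreath_Cp_C2 p) \<Longrightarrow>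
    x \<otimes>\<^bsub>wreath_Cp_C2 p\<^esub> y \<in> carrier (wreath_Cp_C2 p)"
  using p_pos by (cases x; cases y) (auto simp: wreath_Cp_C2_def)

lemma W_card: "card (carrier (wreath_Cp_C2 p)) = 2 * p * p"
proof -
  have "carrier (wreath_Cp_C2 p) = {..<p} \<times> {..<p} \<times> (UNIV :: bool set)"
    by (auto simp: wreath_Cp_C2_def)
  thus ?thesis by (simp add: card_cartesian_product)
qed

theorem main:
  "card H = p
    \<and> (\<exists>a \<in> carrier G - K. a \<noteq> \<one> \<and> a \<otimes> a = \<one>
         \<and> (let Ha = {inv a \<otimes> h \<otimes> a | h. h \<in> H} in
              Ha \<lhd> G\<lparr>carrier := K\<rparr> \<and> H \<inter> Ha = {\<one>} \<and> H <#> Ha = K))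
    \<and> G \<cong> wreath_Cp_C2 p"
proof -
  obtain a where aG: "a \<in> carrier G - K" and a1: "a \<noteq> \<one>" and aa: "a \<otimes> a = \<one>"
    using involution by blast
  have a: "a \<in> carrier G" "a \<notin> K" using aG by auto
  have Haeq: "{inv a \<otimes> h \<otimes> a | h. h \<in> H} = cj a" by (simp add: cj_def)
  have prodK: "H <#> cj a = K"
  proof -
    have c: "card (H <#> cj a) = card K" using card_prod[OF a] card_H card_K by simp
    show ?thesis by (rule card_subset_eq[OF finK prod_sub(2)[OF a] c])
  qed
  have part2: "\<exists>a \<in> carrier G - K. a \<noteq> \<one> \<and> a \<otimes> a = \<one>
         \<and> (let Ha = {inv a \<otimes> h \<otimes> a | h. h \<in> H} in
              Ha \<lhd> G\<lparr>carrier := K\<rparr> \<and> H \<inter> Ha = {\<one>} \<and> H <#> Ha = K)"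
  proof (rule bexI[OF _ aG])
    show "a \<noteq> \<one> \<and> a \<otimes> a = \<one> \<and> (let Ha = {inv a \<otimes> h \<otimes> a | h. h \<in> H} in Ha \<lhd> G\<lparr>carrier := K\<rparr> \<and> H \<inter> Ha = {\<one>} \<and> H <#> Ha = K)"
      unfolding Let_def Haeq by (intro conjI a1 aa cj_normal[OF a] cj_inter[OF a] prodK)
  qed
  have ia: "inv a = a" by (rule inv_equality[OF aa a(1) a(1)])
  obtain h where hH: "h \<in> H" and h1: "h \<noteq> \<one>"
  proof -
    have "\<exists>h \<in> H. h \<noteq> \<one>"
    proof (rule ccontr)
      assume "\<not> (\<exists>h \<in> H. h \<noteq> \<one>)"
      hence "H \<subseteq> {\<one>}" by blast
      hence "H = {\<one>}" using oneH by blast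
      thus False using Hnt by simp
    qed
    thus ?thesis using that by blast
  qed
  have hc: "h \<in> carrier G" using hH Hc by blast
  have hK: "h \<in> K" using hH HK by blast
  define B where "B = a \<otimes> h \<otimes> a"
  have Bcj: "B \<in> cj a" unfolding B_def using cjI[OF a hH] unfolding ia .
  have BK: "B \<in> K" using Bcj cj_sub_K[OF a] by blast
  have Bc: "B \<in> carrier G" unfolding B_def using a(1) hc by simp
  have gH: "group (G\<lparr>carrier := H\<rparr>)" by (rule subgroup.subgroup_is_group[OF HsubG is_group])
  have "h [^]\<^bsub>G\<lparr>carrier := H\<rparr>\<^esub> order (G\<lparr>carrier := H\<rparr>) = \<one>\<^bsub>G\<lparr>carrier := H\<rparr>\<^esub>"
    by (rule group.pow_order_eq_1[OF gH]) (simp add: hH)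
  hence hp: "h [^] p = \<one>" by (simp add: nat_pow_consistent[symmetric] order_def card_H)
  have Bp: "B [^] p = \<one>"
  proof -
    have "inv a \<otimes> h [^] p \<otimes> a = (inv a \<otimes> h \<otimes> a) [^] p" by (rule conj_pow[OF hc a(1)])
    thus ?thesis unfolding hp ia B_def using a(1) aa by simp
  qed
  have B1: "B \<noteq> \<one>"
  proof
    assume "B = \<one>"
    hence "a \<otimes> (a \<otimes> h \<otimes> a) \<otimes> a = a \<otimes> \<one> \<otimes> a" unfolding B_def by simp
    moreover have "a \<otimes> (a \<otimes> h \<otimes> a) \<otimes> a = (a \<otimes> a) \<otimes> h \<otimes> (a \<otimes> a)" using a(1) hc by (simp add: m_assoc)
    ultimately have "h = \<one>" using a(1) hc aa by simp
    thus False using h1 by simp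
  qed
  have hB: "h \<otimes> B = B \<otimes> h"
  proof -
    define c where "c = h \<otimes> B \<otimes> inv h \<otimes> inv B"
    have c1: "h \<otimes> B \<otimes> inv h \<in> cj a" by (rule normK[OF cj_normal[OF a] hK Bcj])
    have "c \<in> cj a" unfolding c_def
      by (rule subgroup.m_closed[OF cj_subgroup[OF a] c1 subgroup.m_inv_closed[OF cj_subgroup[OF a] Bcj]])
    moreover have "c \<in> H"
    proof -
      have ihH: "inv h \<in> H" by (rule subgroup.m_inv_closed[OF HsubG hH])
      have c2: "B \<otimes> inv h \<otimes> inv B \<in> H" by (rule Hconj[OF BK ihH])
      have "c = h \<otimes> (B \<otimes> inv h \<otimes> inv B)" unfolding c_def using hc Bc by (simp add: m_assoc)
      thus ?thesis using subgroup.m_closed[OF HsubG hH c2] by simp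
    qed
    ultimately have "c \<in> H \<inter> cj a" by simp
    hence c0: "c = \<one>" unfolding cj_inter[OF a] by simp
    have "inv (B \<otimes> h) = inv h \<otimes> inv B" using Bc hc by (simp add: inv_mult_group)
    hence "(h \<otimes> B) \<otimes> inv (B \<otimes> h) = \<one>" using c0 hc Bc unfolding c_def by (simp add: m_assoc)
    hence "inv (inv (B \<otimes> h)) = h \<otimes> B" using hc Bc by (intro inv_equality) simp_all
    thus ?thesis using hc Bc by simp
  qed
  define psi where "psi = (\<lambda>(x::nat, y::nat, b::bool). h [^] x \<otimes> B [^] y \<otimes> (if b then a else \<one>))"
  have aAa: "a \<otimes> h \<otimes> a = B" unfolding B_def ..
  have hom: "psi \<in> hom (wreath_Cp_C2 p) G"
  proof (rule homI)
    fix u assume "u \<in> carrier (wreath_Cp_C2 p)"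
    thus "psi u \<in> carrier G" unfolding psi_def using hc Bc a(1) by (cases u) auto
  next
    fix u v assume "u \<in> carrier (wreath_Cp_C2 p)" "v \<in> carrier (wreath_Cp_C2 p)"
    obtain x1 y1 b1 where u: "u = (x1, y1, b1)" by (cases u) auto
    obtain x2 y2 b2 where v: "v = (x2, y2, b2)" by (cases v) auto
    have "(case wr_mult p (x1, y1, b1) (x2, y2, b2) of (x, y, b) \<Rightarrow> h [^] x \<otimes> B [^] y \<otimes> (if b then a else \<one>))
       = (h [^] x1 \<otimes> B [^] y1 \<otimes> (if b1 then a else \<one>)) \<otimes> (h [^] x2 \<otimes> B [^] y2 \<otimes> (if b2 then a else \<one>))"
      by (rule wr_hom_aux[OF hc Bc a(1) hp Bp hB aa aAa])
    thus "psi (u \<otimes>\<^bsub>wreath_Cp_C2 p\<^esub> v) = psi u \<otimes> psi v"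
      unfolding psi_def u v by (simp add: wreath_Cp_C2_def)
  qed
  have kK: "\<And>x y. h [^] (x::nat) \<otimes> B [^] (y::nat) \<in> K"
  proof -
    fix x y :: nat
    have "h [^] x \<in> K" using subgroup_pow_closed[OF HsubG hH] HK by blast
    moreover have "B [^] y \<in> K" using subgroup_pow_closed[OF cj_subgroup[OF a] Bcj] cj_sub_K[OF a] by blast
    ultimately show "h [^] x \<otimes> B [^] y \<in> K" by (rule subgroup.m_closed[OF Ksub])
  qed
  have noa: "\<And>k1 k2. k1 \<in> K \<Longrightarrow> k2 \<in> K \<Longrightarrow> k1 \<otimes> a \<noteq> k2"
  proof
    fix k1 k2 assume k: "k1 \<in> K" "k2 \<in> K" "k1 \<otimes> a = k2"
    have kc: "k1 \<in> carrier G" using k(1) Kc by blast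
    have "inv k1 \<otimes> (k1 \<otimes> a) = inv k1 \<otimes> k2" using k(3) by simp
    hence "a = inv k1 \<otimes> k2" using kc a(1) by simp
    moreover have "inv k1 \<otimes> k2 \<in> K"
      by (rule subgroup.m_closed[OF Ksub subgroup.m_inv_closed[OF Ksub k(1)] k(2)])
    ultimately show False using a(2) by simp
  qed
  have inj: "inj_on psi (carrier (wreath_Cp_C2 p))"
  proof (rule inj_onI)
    fix u v assume uW: "u \<in> carrier (wreath_Cp_C2 p)" and vW: "v \<in> carrier (wreath_Cp_C2 p)"
      and e: "psi u = psi v"
    obtain x1 y1 b1 where u: "u = (x1, y1, b1)" by (cases u) auto
    obtain x2 y2 b2 where v: "v = (x2, y2, b2)" by (cases v) auto
    have lt: "x1 < p" "y1 < p" "x2 < p" "y2 < p" using uW vW unfolding u v by (auto simp: wreath_Cp_C2_def)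
    have e': "h [^] x1 \<otimes> B [^] y1 \<otimes> (if b1 then a else \<one>) = h [^] x2 \<otimes> B [^] y2 \<otimes> (if b2 then a else \<one>)"
      using e unfolding psi_def u v by simp
    have bb: "b1 = b2"
    proof (rule ccontr)
      assume ne: "b1 \<noteq> b2"
      show False
      proof (cases b1)
        case True
        hence "h [^] x1 \<otimes> B [^] y1 \<otimes> a = h [^] x2 \<otimes> B [^] y2" using e' ne hc Bc by simp
        thus False using noa[OF kK kK] by blast
      next
        case False
        hence "h [^] x2 \<otimes> B [^] y2 \<otimes> a = h [^] x1 \<otimes> B [^] y1" using e' ne hc Bc by simp
        thus False using noa[OF kK kK] by blast
      qed
    qed
    have "h [^] x1 \<otimes> B [^] y1 = h [^] x2 \<otimes> B [^] y2"
    proof (cases b1)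
      case True
      hence "(h [^] x1 \<otimes> B [^] y1) \<otimes> a = (h [^] x2 \<otimes> B [^] y2) \<otimes> a" using e' bb by simp
      thus ?thesis using r_cancel[of a "h [^] x1 \<otimes> B [^] y1" "h [^] x2 \<otimes> B [^] y2"] a(1) hc Bc by simp
    next
      case False
      thus ?thesis using e' bb hc Bc by simp
    qed
    hence "h [^] x1 = h [^] x2 \<and> B [^] y1 = B [^] y2"
      by (rule prod_inj[OF a subgroup_pow_closed[OF HsubG hH] subgroup_pow_closed[OF cj_subgroup[OF a] Bcj] subgroup_pow_closed[OF HsubG hH] subgroup_pow_closed[OF cj_subgroup[OF a] Bcj]])
    hence "x1 = x2" "y1 = y2"
      using pow_inj_prime[OF hc hp h1 pprime lt(1) lt(3)] pow_inj_prime[OF Bc Bp B1 pprime lt(2) lt(4)] by simp_all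
    thus "u = v" unfolding u v using bb by simp
  qed
  have img: "psi ` carrier (wreath_Cp_C2 p) = carrier G"
  proof (rule card_subset_eq[OF fin])
    show "psi ` carrier (wreath_Cp_C2 p) \<subseteq> carrier G" using hom unfolding hom_def by blast
    have "card (psi ` carrier (wreath_Cp_C2 p)) = card (carrier (wreath_Cp_C2 p))"
      by (rule card_image[OF inj])
    thus "card (psi ` carrier (wreath_Cp_C2 p)) = card (carrier G)"
      using W_card order_G card_K by (simp add: order_def)
  qed
  have "psi \<in> iso (wreath_Cp_C2 p) G"
    using hom inj img unfolding iso_def bij_betw_def by blast
  hence "inv_into (carrier (wreath_Cp_C2 p)) psi \<in> iso G (wreath_Cp_C2 p)"
    by (rule iso_sym_closed) (rule W_closed)
  hence "G \<cong> wreath_Cp_C2 p" by (rule is_isoI)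
  thus ?thesis using card_H part2 by blast
qed

end


lemma Rmap_Bij:
  assumes "loop L m e" "a \<in> L"
  shows "Rmap L m a \<in> Bij L"
proof -
  have b: "bij_betw (\<lambda>x. m x a) L L" using assms unfolding loop_def by blast
  have "bij_betw (Rmap L m a) L L"
    using b unfolding Rmap_def by (rule bij_betw_cong[THEN iffD1, rotated]) simp
  thus ?thesis unfolding Bij_def Rmap_def by simp
qed

theorem corollary5p4:
  fixes L :: "'a set" and m :: "'a \<Rightarrow> 'a \<Rightarrow> 'a" and e :: 'a and p :: nat
    and K :: "('a \<Rightarrow> 'a) set"
  defines "G \<equiv> env_group L m" and "H \<equiv> env_stab L m e"
  assumes "Factorial_Ring.prime p" and "odd p"
    and "finite L" and "card L = 2 * p"
    and "rcc_loop L m e"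
    and "subgroup K G" and "H \<subset> K" and "K \<subset> carrier G"
    and "card (rcosets\<^bsub>G\<^esub> K) = 2"
    and "card (rcosets\<^bsub>G\<lparr>carrier := K\<rparr>\<^esub> H) = p"
    and "H \<noteq> {\<one>\<^bsub>G\<^esub>}"
    and "H \<lhd> G\<lparr>carrier := K\<rparr>"
  shows "card H = p
    \<and> (\<exists>a \<in> carrier G - K. a \<noteq> \<one>\<^bsub>G\<^esub> \<and> a \<otimes>\<^bsub>G\<^esub> a = \<one>\<^bsub>G\<^esub>
         \<and> (let Ha = {inv\<^bsub>G\<^esub> a \<otimes>\<^bsub>G\<^esub> h \<otimes>\<^bsub>G\<^esub> a | h. h \<in> H} in
              Ha \<lhd> G\<lparr>carrier := K\<rparr> \<and> H \<inter> Ha = {\<one>\<^bsub>G\<^esub>} \<and> H <#>\<^bsub>G\<^esub> Ha = K))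
    \<and> G \<cong> wreath_Cp_C2 p"
proof -
  have lp: "loop L m e" using assms(7) unfolding rcc_loop_def by blast
  have eL: "e \<in> L" using lp unfolding loop_def by blast
  have gensub: "Rmap L m ` L \<subseteq> carrier (BijGroup L)"
    using Rmap_Bij[OF lp] by (auto simp: BijGroup_def)
  have sgen: "subgroup (generate (BijGroup L) (Rmap L m ` L)) (BijGroup L)"
    by (rule group.generate_is_subgroup[OF group_BijGroup gensub])
  have cG: "carrier G = generate (BijGroup L) (Rmap L m ` L)"
    unfolding G_def env_group_def by simp
  have grpG: "group G"
    unfolding G_def env_group_def by (rule subgroup.subgroup_is_group[OF sgen group_BijGroup])
  interpret gG: group G by (rule grpG)
  have cGB: "carrier G \<subseteq> Bij L"
    using subgroup.subset[OF sgen] cG by (simp add: BijGroup_def)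
  have finG: "finite (carrier G)"
  proof -
    have s1: "Bij L \<subseteq> extensional_funcset L L"
    proof
      fix f assume f: "f \<in> Bij L"
      show "f \<in> extensional_funcset L L"
        unfolding PiE_def using Bij_imp_extensional[OF f] Bij_imp_funcset[OF f] by (rule IntI[rotated])
    qed
    have f1: "finite (extensional_funcset L L)" by (rule finite_PiE[OF assms(5) assms(5)])
    show ?thesis by (rule finite_subset[OF subset_trans[OF cGB s1] f1])
  qed
  have multG: "\<And>f g. f \<in> carrier G \<Longrightarrow> g \<in> carrier G \<Longrightarrow> f \<otimes>\<^bsub>G\<^esub> g = compose L f g"
    using cGB unfolding G_def env_group_def by (auto simp: BijGroup_def)
  have oneG: "\<one>\<^bsub>G\<^esub> = (\<lambda>x\<in>L. x)" unfolding G_def env_group_def by (simp add: BijGroup_def)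
  have RG: "\<And>y. y \<in> L \<Longrightarrow> Rmap L m y \<in> carrier G"
    unfolding cG by (rule generate.incl) simp
  have Re: "\<And>y. y \<in> L \<Longrightarrow> Rmap L m y e = y"
    using lp eL unfolding loop_def Rmap_def by simp
  have core: "\<And>g. g \<in> H \<Longrightarrow> (\<forall>x\<in>carrier G. x \<otimes>\<^bsub>G\<^esub> g \<otimes>\<^bsub>G\<^esub> inv\<^bsub>G\<^esub> x \<in> H) \<Longrightarrow> g = \<one>\<^bsub>G\<^esub>"
  proof -
    fix g assume gH: "g \<in> H" and all: "\<forall>x\<in>carrier G. x \<otimes>\<^bsub>G\<^esub> g \<otimes>\<^bsub>G\<^esub> inv\<^bsub>G\<^esub> x \<in> H"
    have gG: "g \<in> carrier G" and ge: "g e = e" using gH unfolding H_def env_stab_def G_def by auto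
    have gfix: "g y = y" if y: "y \<in> L" for y
    proof -
      define t where "t = Rmap L m y"
      have tG: "t \<in> carrier G" unfolding t_def by (rule RG[OF y])
      have te: "t e = y" unfolding t_def by (rule Re[OF y])
      have itG: "inv\<^bsub>G\<^esub> t \<in> carrier G" by (rule group.inv_closed[OF grpG tG])
      define c where "c = inv\<^bsub>G\<^esub> t \<otimes>\<^bsub>G\<^esub> g \<otimes>\<^bsub>G\<^esub> t"
      have "inv\<^bsub>G\<^esub> t \<otimes>\<^bsub>G\<^esub> g \<otimes>\<^bsub>G\<^esub> inv\<^bsub>G\<^esub> (inv\<^bsub>G\<^esub> t) \<in> H" using all itG by blast
      hence cH: "c \<in> H" unfolding c_def using group.inv_inv[OF grpG tG] by simp
      hence cG': "c \<in> carrier G" and ce: "c e = e" unfolding H_def env_stab_def G_def by auto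
      have "t \<otimes>\<^bsub>G\<^esub> c = g \<otimes>\<^bsub>G\<^esub> t"
        unfolding c_def using grpG tG gG itG
        by (simp add: gG.m_assoc)
      hence "compose L t c e = compose L g t e" using multG tG gG cG' by simp
      thus "g y = y" using eL te ce by (simp add: compose_def)
    qed
    have "g \<in> extensional L" using gG cGB Bij_imp_extensional by blast
    thus "g = \<one>\<^bsub>G\<^esub>" unfolding oneG using gfix by (auto simp: extensional_def)
  qed
  have csa: "cor_setting_axioms G K H p"
    unfolding cor_setting_axioms_def
    by (intro conjI allI impI finG assms(1-4,8-14)) (rule core; assumption)
  interpret cs: cor_setting G K H p by (rule cor_setting.intro[OF grpG csa])
  show ?thesis by (rule cs.main)
qed


end
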